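(* In the setting of the context, consider a Case 2 spacetime ($\partial_v r_->0$) with $\lim_{v\to\infty}x_-(v)/x_+(v)=0$. If there exist constants $\alpha,\beta$ with $0<\alpha<1$, $0<\beta$, and constants $\varepsilon_\alpha,\varepsilon_\beta>0$ such that $$\frac{dx_-/dv}{(x_++\beta x_-)x_-}<-\frac{h_c}{2}(1+\varepsilon_\beta)\frac{1+\beta}{\beta},\qquad \frac{dx_+/dv}{(\alpha x_+-x_-)x_+}>-\frac{h_c}{2}(1-\varepsilon_\alpha)\frac{1-\alpha}{\alpha}$$ hold for all $v>v_0$ for some $v_0$, then the spacetime is of Type 2.
   Context: Spherically symmetric spacetime $ds^2=-f(v,r)A(v,r)^2dv^2+2A(v,r)\,dr\,dv+r^2d\Omega^2$ with $A>0$, $f,A\to1$ as $r\to\infty$, $f(v,0)=1$, $\partial_rf(v,0)=\partial_rA(v,0)=0$; $f(v,\cdot)$ has exactly two zeros $r_+(v)>r_-(v)$ (outer/inner apparent horizons, AHs), $f=F(r-r_+)(r-r_-)$ with $F>0$, and $h=AF>0$. Assumptions: $\partial_v r_+<0$; $r_\pm(v)\to r_c$ as $v\to\infty$; the sign of $\partial_v r_-$ is constant; the $v\to\infty$ limits of $A,F,h$ behave as analytic functions of $r$, so all $\partial_r^n h$ converge as $v\to\infty$; $h_c=\lim_{v\to\infty}h(v,r_c)$. With $x=r-r_c$, $x_\pm=r_\pm-r_c$ and $h$ regarded as a function of $(v,x)$, radially outgoing null geodesics solve $dx/dv=\tfrac12h(v,x)(x-x_+(v))(x-x_-(v))$. Case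 2 means $\partial_v r_->0$. In Case 2, Type 1 means that there is a unique outgoing null geodesic between the two AHs crossing neither AH (the event horizon); Type 2 means a set of positive measure of such geodesics exists. *)

theory Defs
  imports "HOL-Analysis.Analysis"
begin

text \<open>Coordinates: x = r - r_c; xp, xm are x_+(v), x_-(v); h v x is h(v,x).\<close>

definition outgoing_geodesic ::
  "(real \<Rightarrow> real \<Rightarrow> real) \<Rightarrow> (real \<Rightarrow> real) \<Rightarrow> (real \<Rightarrow> real) \<Rightarrow> real \<Rightarrow> (real \<Rightarrow> real) \<Rightarrow> bool" where
  "outgoing_geodesic h xp xm v1 x \<longleftrightarrow>
     (\<forall>v\<ge>v1. (x has_real_derivative (h v (x v) * (x v - xp v) * (x v - xm v) / 2)) (at v within {v1..}))"

definition between_AHs :: "(real \<Rightarrow> real) \<Rightarrow> (real \<Rightarrow> real) \<Rightarrow> real \<Rightarrow> (real \<Rightarrow> real) \<Rightarrow> bool" where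
  "between_AHs xp xm v1 x \<longleftrightarrow> (\<forall>v\<ge>v1. xm v < x v \<and> x v < xp v)"

definition trapped_data ::
  "(real \<Rightarrow> real \<Rightarrow> real) \<Rightarrow> (real \<Rightarrow> real) \<Rightarrow> (real \<Rightarrow> real) \<Rightarrow> real \<Rightarrow> real set" where
  "trapped_data h xp xm v1 =
     {x0. \<exists>x. outgoing_geodesic h xp xm v1 x \<and> x v1 = x0 \<and> between_AHs xp xm v1 x}"

definition type2 :: "(real \<Rightarrow> real \<Rightarrow> real) \<Rightarrow> (real \<Rightarrow> real) \<Rightarrow> (real \<Rightarrow> real) \<Rightarrow> bool" where
  "type2 h xp xm \<longleftrightarrow>
     (\<exists>v1. trapped_data h xp xm v1 \<in> sets lebesgue \<and> 0 < emeasure lebesgue (trapped_data h xp xm v1))"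

end

theory Submission
  imports Defs
begin


lemma deriv_cont_on:
  assumes "\<And>t. t \<in> S \<Longrightarrow> (E has_real_derivative E' t) (at t within S)"
  shows "continuous_on S E"
  using assms DERIV_continuous continuous_on_eq_continuous_within by blast

lemma mono_within:
  fixes E :: "real \<Rightarrow> real"
  assumes ab: "a \<le> b"
    and d: "\<And>t. t \<in> {a..b} \<Longrightarrow> (E has_real_derivative E' t) (at t within {a..b})"
    and n: "\<And>t. t \<in> {a..b} \<Longrightarrow> E' t \<ge> 0"
  shows "E a \<le> E b"
proof (rule DERIV_nonneg_imp_increasing_open[OF ab])
  fix x assume "a < x" "x < b"
  then show "\<exists>y. DERIV E x :> y \<and> y \<ge> 0"
    using d[of x] n[of x] at_within_Icc_at[of a x b] by auto
next
  show "continuous_on {a..b} E" using deriv_cont_on[OF d] .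
qed

lemma pos_persist:
  fixes D :: "real \<Rightarrow> real"
  assumes ab: "a \<le> b"
    and d: "\<And>t. t \<in> {a..b} \<Longrightarrow> (D has_real_derivative D' t) (at t within {a..b})"
    and L: "\<And>t. t \<in> {a..b} \<Longrightarrow> \<bar>D' t\<bar> \<le> L * \<bar>D t\<bar>"
    and pos: "D a > 0"
  shows "D b > 0"
proof -
  define E where "E t = (D t)\<^sup>2 * exp (2 * L * t)" for t
  have dE: "(E has_real_derivative (2 * D t * D' t * exp (2*L*t) + (D t)\<^sup>2 * (exp (2*L*t) * (2 * L)))) (at t within {a..b})"
    if "t \<in> {a..b}" for t
    unfolding E_def
    by (auto intro!: derivative_eq_intros d[OF that])
  have nn: "2 * D t * D' t * exp (2*L*t) + (D t)\<^sup>2 * (exp (2*L*t) * (2 * L)) \<ge> 0"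
    if "t \<in> {a..b}" for t
  proof -
    have "D t * D' t \<ge> - (L * (D t)\<^sup>2)"
    proof -
      have "\<bar>D t * D' t\<bar> \<le> \<bar>D t\<bar> * (L * \<bar>D t\<bar>)"
        using L[OF that] by (simp add: abs_mult mult_left_mono)
      moreover have "\<bar>D t\<bar> * (L * \<bar>D t\<bar>) = L * (D t)\<^sup>2"
        by (metis abs_mult_self_eq mult.left_commute power2_eq_square)
      ultimately show ?thesis using abs_ge_minus_self[of "D t * D' t"] by linarith
    qed
    then have "2 * D t * D' t + (D t)\<^sup>2 * (2 * L) \<ge> 0" by (simp add: algebra_simps)
    then have "(2 * D t * D' t + (D t)\<^sup>2 * (2 * L)) * exp (2*L*t) \<ge> 0" by simp
    then show ?thesis by (simp add: algebra_simps)
  qed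
  have "E a \<le> E b" by (rule mono_within[OF ab dE nn])
  moreover have "E a > 0" using pos by (simp add: E_def)
  ultimately have "E b > 0" by simp
  then have Db: "D b \<noteq> 0" by (auto simp: E_def)
  show ?thesis
  proof (rule ccontr)
    assume "\<not> D b > 0"
    then have "D b \<le> 0" by simp
    have "continuous_on {a..b} D" using deriv_cont_on[OF d] .
    then obtain s where s: "s \<in> {a..b}" "D s = 0"
      using IVT2'[of D b 0 a] \<open>D b \<le> 0\<close> pos ab by fastforce
    have "E a \<le> E s"
      by (rule mono_within[of a s E]) (use s in \<open>auto intro: DERIV_subset[OF dE] nn\<close>)
    then show False using \<open>E a > 0\<close> s by (simp add: E_def)
  qed
qed



lemma contG:
  assumes "continuous_on UNIV (\<lambda>p. G (fst p) (snd p))" "continuous_on S f"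
  shows "continuous_on S (\<lambda>s. G s (f s))"
proof -
  have "continuous_on S (\<lambda>s. (s, f s))" by (intro continuous_intros assms(2))
  from continuous_on_compose2[OF assms(1) this] show ?thesis by simp
qed

lemma exp_integral:
  fixes K c a r :: real
  assumes "K > 0" "a \<le> r"
  shows "integral {a..r} (\<lambda>s. c * exp (K * (s - a))) = c * exp (K * (r - a)) / K - c / K"
proof -
  have h: "((\<lambda>s. c * exp (K * (s - a))) has_integral (c * exp (K * (r - a)) / K - c * exp (K * (a - a)) / K)) {a..r}"
  proof (rule fundamental_theorem_of_calculus[OF assms(2)])
    fix x assume "x \<in> {a..r}"
    have "((\<lambda>s. c * exp (K * (s - a)) / K) has_real_derivative (c * (exp (K * (x - a)) * (K * (1 - 0))) / K)) (at x within {a..r})"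
      by (auto intro!: derivative_eq_intros)
    then show "((\<lambda>s. c * exp (K * (s - a)) / K) has_vector_derivative c * exp (K * (x - a))) (at x within {a..r})"
      using assms(1) by (simp add: has_real_derivative_iff_has_vector_derivative)
  qed
  have "c * exp (K * (a - a)) / K = c / K" by simp
  with h show ?thesis by (metis integral_unique)
qed

lemma local_exist:
  fixes G :: "real \<Rightarrow> real \<Rightarrow> real" and a b L x0 :: real
  assumes cont: "continuous_on UNIV (\<lambda>p. G (fst p) (snd p))"
    and ab: "a \<le> b" and Lpos: "L > 0"
    and lip: "\<And>t x y. t \<in> {a..b} \<Longrightarrow> \<bar>G t x - G t y\<bar> \<le> L * \<bar>x - y\<bar>"
  shows "\<exists>X. X a = x0 \<and> (\<forall>t\<in>{a..b}. (X has_real_derivative G t (X t)) (at t within {a..b}))"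
proof -
  define K where "K = 2 * L"
  have K: "K > 0" using Lpos by (simp add: K_def)
  define cl where "cl t = max a (min b t)" for t
  have cl_in: "cl t \<in> {a..b}" for t using ab by (auto simp: cl_def)
  have cl_id: "t \<in> {a..b} \<Longrightarrow> cl t = t" for t by (auto simp: cl_def)
  have cl_cont: "continuous_on UNIV cl" unfolding cl_def by (intro continuous_intros)
  define w where "w t = exp (- (K * (cl t - a)))" for t
  have w_pos: "w t > 0" for t by (simp add: w_def)
  have wnz: "w t \<noteq> 0" for t using w_pos[of t] by linarith
  have w_cont: "continuous_on UNIV w" unfolding w_def by (intro continuous_intros cl_cont)
  define \<phi> where "\<phi> u s = G s (u s / w s)" for u :: "real \<Rightarrow> real" and s
  have phi_cont: "continuous_on UNIV (\<phi> u)" if "continuous_on UNIV u" for u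
    unfolding \<phi>_def
    by (rule contG[OF cont]) (use wnz in \<open>auto intro!: continuous_intros that w_cont\<close>)
  define F where "F u r = integral {a..r} (\<phi> u)" for u r
  have F_cont: "continuous_on {a..b} (F u)" if "continuous_on UNIV u" for u
    unfolding F_def
    by (rule indefinite_integral_continuous_1, rule integrable_continuous_real)
       (use phi_cont[OF that] continuous_on_subset in blast)
  define \<Psi> where "\<Psi> u r = exp (- (K * (r - a))) * (x0 + F u r)" for u r
  have Psi_cont: "continuous_on {a..b} (\<Psi> u)" if "continuous_on UNIV u" for u
    unfolding \<Psi>_def by (intro continuous_intros F_cont that)
  define P where "P u t = \<Psi> u (cl t)" for u t
  have P_w: "P u t = w t * (x0 + F u (cl t))" for u t
    by (simp add: P_def \<Psi>_def w_def)
  have P_bc: "P u \<in> bcontfun" if "continuous_on UNIV u" for u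
  proof -
    have c: "continuous_on UNIV (P u)"
      unfolding P_def
      by (rule continuous_on_compose2[OF Psi_cont[OF that] cl_cont]) (use cl_in in auto)
    have "range (P u) \<subseteq> \<Psi> u ` {a..b}" using cl_in by (auto simp: P_def)
    moreover have "bounded (\<Psi> u ` {a..b})"
      by (intro compact_imp_bounded compact_continuous_image Psi_cont that compact_Icc)
    ultimately have "bounded (range (P u))" by (rule bounded_subset[rotated])
    with c show ?thesis by (simp add: bcontfun_def)
  qed
  define Q where "Q u = Bcontfun (P (apply_bcontfun u))" for u :: "real \<Rightarrow>\<^sub>C real"
  have Q_app: "apply_bcontfun (Q u) = P (apply_bcontfun u)" for u
    unfolding Q_def by (rule Bcontfun_inverse[OF P_bc]) simp
  have contr: "dist (Q u) (Q v) \<le> (1/2) * dist u v" for u v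
  proof (rule dist_bound)
    fix t
    define r where "r = cl t"
    have r: "r \<in> {a..b}" using cl_in by (simp add: r_def)
    define c where "c = L * dist u v"
    have i1: "\<phi> u integrable_on {a..r}" "\<phi> v integrable_on {a..r}"
      using phi_cont[of "apply_bcontfun u"] phi_cont[of "apply_bcontfun v"]
      by (auto intro!: integrable_continuous_real intro: continuous_on_subset)
    have i2: "(\<lambda>s. c * exp (K * (s - a))) integrable_on {a..r}"
      by (intro integrable_continuous_real continuous_intros)
    have bnd: "norm (\<phi> u s - \<phi> v s) \<le> c * exp (K * (s - a))" if s: "s \<in> {a..r}" for s
    proof -
      have s': "s \<in> {a..b}" using s r by auto
      have ws: "w s = exp (- (K * (s - a)))" using cl_id[OF s'] by (simp add: w_def)
      have "\<bar>\<phi> u s - \<phi> v s\<bar> \<le> L * \<bar>u s / w s - v s / w s\<bar>"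
        unfolding \<phi>_def by (rule lip[OF s'])
      also have "\<bar>u s / w s - v s / w s\<bar> = \<bar>u s - v s\<bar> * exp (K * (s - a))"
        using w_pos[of s] by (simp add: ws diff_divide_distrib[symmetric] abs_mult exp_minus divide_inverse left_diff_distrib[symmetric])
      also have "\<bar>u s - v s\<bar> \<le> dist u v"
        using dist_bounded[of u s v] by (simp add: dist_real_def)
      finally show ?thesis
        using Lpos by (simp add: c_def mult_right_mono mult_left_mono mult.assoc)
    qed
    have "norm (integral {a..r} (\<lambda>s. \<phi> u s - \<phi> v s)) \<le> integral {a..r} (\<lambda>s. c * exp (K * (s - a)))"
      by (rule integral_norm_bound_integral) (use i1 i2 bnd in \<open>auto intro: integrable_diff\<close>)
    also have "\<dots> = c * exp (K * (r - a)) / K - c / K"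
      using exp_integral[OF K, of a r c] r by simp
    also have "\<dots> \<le> c * exp (K * (r - a)) / K"
      using K Lpos by (simp add: c_def)
    finally have I: "\<bar>F u r - F v r\<bar> \<le> c * exp (K * (r - a)) / K"
      unfolding F_def using integral_diff[OF i1] by simp
    have "dist (Q u t) (Q v t) = w t * \<bar>F u r - F v r\<bar>"
      using w_pos[of t] by (simp add: Q_app P_w r_def dist_real_def right_diff_distrib[symmetric] abs_mult)
    also have "\<dots> \<le> w t * (c * exp (K * (r - a)) / K)"
      by (rule mult_left_mono[OF I]) (use w_pos[of t] in linarith)
    also have "\<dots> = c / K"
      using K by (simp add: w_def r_def exp_minus field_simps flip: exp_add)
    also have "\<dots> = (1/2) * dist u v" using Lpos by (simp add: c_def K_def)
    finally show "dist (Q u t) (Q v t) \<le> (1/2) * dist u v" .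
  qed
  obtain u where u: "Q u = u"
    using banach_fix_type[of "1/2" Q] contr by auto
  define X where "X t = u t / w t" for t
  have uP: "u t = P u t" for t using Q_app[of u] u by metis
  have phiX: "\<phi> u = (\<lambda>s. G s (X s))" by (simp add: \<phi>_def X_def fun_eq_iff)
  have X_eq: "X t = x0 + integral {a..t} (\<lambda>s. G s (X s))" if "t \<in> {a..b}" for t
  proof -
    have "X t = P u t / w t" by (simp add: X_def uP[symmetric])
    also have "\<dots> = x0 + F u t" using w_pos[of t] cl_id[OF that] by (simp add: P_w)
    finally show ?thesis by (simp add: F_def phiX)
  qed
  have Gc: "continuous_on {a..b} (\<lambda>s. G s (X s))"
    using phi_cont[of "apply_bcontfun u"] phiX continuous_on_subset by fastforce
  show ?thesis
  proof (intro exI conjI ballI)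
    show "X a = x0" using X_eq[of a] ab by simp
    fix t assume t: "t \<in> {a..b}"
    have "((\<lambda>t. x0 + integral {a..t} (\<lambda>s. G s (X s))) has_real_derivative G t (X t)) (at t within {a..b})"
      by (rule DERIV_add[OF DERIV_const integral_has_real_derivative[OF Gc t], simplified])
    then show "(X has_real_derivative G t (X t)) (at t within {a..b})"
      by (rule has_field_derivative_transform_within[OF _ zero_less_one t]) (simp add: X_eq)
  qed
qed



lemma zero_persist:
  fixes D :: "real \<Rightarrow> real"
  assumes ab: "a \<le> b"
    and d: "\<And>t. t \<in> {a..b} \<Longrightarrow> (D has_real_derivative D' t) (at t within {a..b})"
    and L: "\<And>t. t \<in> {a..b} \<Longrightarrow> \<bar>D' t\<bar> \<le> L * \<bar>D t\<bar>"
    and z: "D a = 0"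
  shows "D b = 0"
proof -
  define E where "E t = - ((D t)\<^sup>2 * exp (- (2 * L * t)))" for t
  have dE: "(E has_real_derivative (- (2 * D t * D' t * exp (- (2*L*t)) + (D t)\<^sup>2 * (exp (- (2*L*t)) * (- (2 * L)))))) (at t within {a..b})"
    if "t \<in> {a..b}" for t
    unfolding E_def
    by (auto intro!: derivative_eq_intros d[OF that])
  have nn: "- (2 * D t * D' t * exp (- (2*L*t)) + (D t)\<^sup>2 * (exp (- (2*L*t)) * (- (2 * L)))) \<ge> 0"
    if "t \<in> {a..b}" for t
  proof -
    have "D t * D' t \<le> L * (D t)\<^sup>2"
    proof -
      have "\<bar>D t * D' t\<bar> \<le> \<bar>D t\<bar> * (L * \<bar>D t\<bar>)"
        using L[OF that] by (simp add: abs_mult mult_left_mono)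
      moreover have "\<bar>D t\<bar> * (L * \<bar>D t\<bar>) = L * (D t)\<^sup>2"
        by (metis abs_mult_self_eq mult.left_commute power2_eq_square)
      ultimately show ?thesis using abs_ge_self[of "D t * D' t"] by linarith
    qed
    then have "2 * D t * D' t - (D t)\<^sup>2 * (2 * L) \<le> 0" by (simp add: algebra_simps)
    then have "(2 * D t * D' t - (D t)\<^sup>2 * (2 * L)) * exp (- (2*L*t)) \<le> 0"
      by (simp add: mult_nonpos_nonneg)
    then show ?thesis by (simp add: algebra_simps)
  qed
  have "E a \<le> E b" by (rule mono_within[OF ab dE nn])
  then have "(D b)\<^sup>2 * exp (- (2 * L * b)) \<le> 0" using z by (simp add: E_def)
  then have "(D b)\<^sup>2 \<le> 0" by (simp add: mult_le_0_iff)
  then show ?thesis by simp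
qed

lemma ode_unique:
  fixes G :: "real \<Rightarrow> real \<Rightarrow> real"
  assumes lip: "\<And>t x y. t \<in> {a..b} \<Longrightarrow> \<bar>G t x - G t y\<bar> \<le> L * \<bar>x - y\<bar>"
    and dX: "\<And>t. t \<in> {a..b} \<Longrightarrow> (X has_real_derivative G t (X t)) (at t within {a..b})"
    and dY: "\<And>t. t \<in> {a..b} \<Longrightarrow> (Y has_real_derivative G t (Y t)) (at t within {a..b})"
    and eq: "X a = Y a" and t: "t \<in> {a..b}"
  shows "X t = Y t"
proof -
  have "(\<lambda>s. X s - Y s) t = 0"
  proof (rule zero_persist[where D = "\<lambda>s. X s - Y s" and a = a and b = t and D' = "\<lambda>s. G s (X s) - G s (Y s)" and L = L])
    show "a \<le> t" using t by simp
    fix s assume s: "s \<in> {a..t}"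
    then have s': "s \<in> {a..b}" using t by auto
    have sub: "{a..t} \<subseteq> {a..b}" using t by auto
    show "((\<lambda>s. X s - Y s) has_real_derivative G s (X s) - G s (Y s)) (at s within {a..t})"
      by (intro DERIV_diff DERIV_subset[OF dX[OF s'] sub] DERIV_subset[OF dY[OF s'] sub])
    show "\<bar>G s (X s) - G s (Y s)\<bar> \<le> L * \<bar>X s - Y s\<bar>" by (rule lip[OF s'])
  qed (use eq in simp)
  then show ?thesis by simp
qed

lemma ode_compare:
  fixes G :: "real \<Rightarrow> real \<Rightarrow> real"
  assumes lip: "\<And>t x y. t \<in> {a..b} \<Longrightarrow> \<bar>G t x - G t y\<bar> \<le> L * \<bar>x - y\<bar>"
    and dX: "\<And>t. t \<in> {a..b} \<Longrightarrow> (X has_real_derivative G t (X t)) (at t within {a..b})"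
    and dY: "\<And>t. t \<in> {a..b} \<Longrightarrow> (Y has_real_derivative G t (Y t)) (at t within {a..b})"
    and lt: "X a < Y a" and t: "t \<in> {a..b}"
  shows "X t < Y t"
proof -
  have "(\<lambda>s. Y s - X s) t > 0"
  proof (rule pos_persist[where D = "\<lambda>s. Y s - X s" and a = a and b = t and D' = "\<lambda>s. G s (Y s) - G s (X s)" and L = L])
    show "a \<le> t" using t by simp
    fix s assume s: "s \<in> {a..t}"
    then have s': "s \<in> {a..b}" using t by auto
    have sub: "{a..t} \<subseteq> {a..b}" using t by auto
    show "((\<lambda>s. Y s - X s) has_real_derivative G s (Y s) - G s (X s)) (at s within {a..t})"
      by (intro DERIV_diff DERIV_subset[OF dX[OF s'] sub] DERIV_subset[OF dY[OF s'] sub])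
    show "\<bar>G s (Y s) - G s (X s)\<bar> \<le> L * \<bar>Y s - X s\<bar>" by (rule lip[OF s'])
  qed (use lt in simp)
  then show ?thesis by simp
qed

lemma global_exist:
  fixes G :: "real \<Rightarrow> real \<Rightarrow> real" and a x0 :: real
  assumes cont: "continuous_on UNIV (\<lambda>p. G (fst p) (snd p))"
    and lip: "\<And>b. \<exists>L>0. \<forall>t\<in>{a..b}. \<forall>x y. \<bar>G t x - G t y\<bar> \<le> L * \<bar>x - y\<bar>"
  shows "\<exists>X. X a = x0 \<and> (\<forall>t\<ge>a. (X has_real_derivative G t (X t)) (at t within {a..}))"
proof -
  have "\<forall>n::nat. \<exists>X. X a = x0 \<and> (\<forall>t\<in>{a..a + real n}. (X has_real_derivative G t (X t)) (at t within {a..a + real n}))"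
  proof
    fix n :: nat
    obtain L where L: "L > 0" "\<forall>t\<in>{a..a + real n}. \<forall>x y. \<bar>G t x - G t y\<bar> \<le> L * \<bar>x - y\<bar>"
      using lip by blast
    show "\<exists>X. X a = x0 \<and> (\<forall>t\<in>{a..a + real n}. (X has_real_derivative G t (X t)) (at t within {a..a + real n}))"
      by (rule local_exist[OF cont _ L(1)]) (use L(2) in auto)
  qed
  then obtain sol where sol0: "\<And>n. sol n a = x0"
    and sold: "\<And>n t. t \<in> {a..a + real n} \<Longrightarrow> (sol n has_real_derivative G t (sol n t)) (at t within {a..a + real n})"
    by metis
  have agree: "sol n t = sol m t" if "a \<le> t" "t \<le> a + real n" "t \<le> a + real m" for n m t
  proof -
    define k where "k = min n m"
    have kn: "real k \<le> real n" "real k \<le> real m" by (auto simp: k_def)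
    obtain L where L: "L > 0" "\<forall>s\<in>{a..a + real k}. \<forall>x y. \<bar>G s x - G s y\<bar> \<le> L * \<bar>x - y\<bar>"
      using lip by blast
    have subn: "{a..a + real k} \<subseteq> {a..a + real n}" and subm: "{a..a + real k} \<subseteq> {a..a + real m}"
      using kn by auto
    have tk: "t \<in> {a..a + real k}" using that by (auto simp: k_def min_def)
    show ?thesis
    proof (rule ode_unique[where G = G and L = L and a = a and b = "a + real k" and X = "sol n" and Y = "sol m" and t = t])
      fix s assume s: "s \<in> {a..a + real k}"
      show "(sol n has_real_derivative G s (sol n s)) (at s within {a..a + real k})"
        using DERIV_subset[OF sold subn] s subn by blast
      show "(sol m has_real_derivative G s (sol m s)) (at s within {a..a + real k})"
        using DERIV_subset[OF sold subm] s subm by blast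
    qed (use L(2) sol0 tk in auto)
  qed
  define N where "N t = nat \<lceil>t - a\<rceil> + 1" for t
  have N: "t \<le> a + real (N t)" if "a \<le> t" for t
    unfolding N_def using that by (simp add: of_nat_nat) linarith
  define X where "X t = sol (N t) t" for t
  show ?thesis
  proof (intro exI conjI allI impI)
    show "X a = x0" by (simp add: X_def sol0)
    fix t assume t: "a \<le> t"
    define M where "M = N t + 1"
    have tM: "t + 1 \<le> a + real M" using N[OF t] by (simp add: M_def)
    have d1: "(sol M has_real_derivative G t (sol M t)) (at t within {a..a + real M})"
      using sold[of t M] t tM by simp
    have "at t within {a..a + real M} = at t within {a..}"
      by (rule at_within_nhd[where S = "{..<a + real M}"]) (use tM in auto)
    with d1 have d2: "(sol M has_real_derivative G t (sol M t)) (at t within {a..})" by simp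
    have XM: "X s = sol M s" if "a \<le> s" "s \<le> a + real M" for s
      unfolding X_def by (rule agree) (use that N in auto)
    have "(X has_real_derivative G t (sol M t)) (at t within {a..})"
      by (rule has_field_derivative_transform_within[OF d2 zero_less_one])
         (use t tM XM in \<open>auto simp: dist_real_def\<close>)
    then show "(X has_real_derivative G t (X t)) (at t within {a..})"
      using XM[of t] t tM by simp
  qed
qed



lemma emeas_Ioo: "p < (q::real) \<Longrightarrow> emeasure lebesgue {p<..<q} = ennreal (q - p)"
  by simp

lemma global_compare:
  fixes G :: "real \<Rightarrow> real \<Rightarrow> real"
  assumes lip: "\<And>b. \<exists>L>0. \<forall>t\<in>{a..b}. \<forall>x y. \<bar>G t x - G t y\<bar> \<le> L * \<bar>x - y\<bar>"
    and dX: "\<And>t. t \<ge> a \<Longrightarrow> (X has_real_derivative G t (X t)) (at t within {a..})"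
    and dY: "\<And>t. t \<ge> a \<Longrightarrow> (Y has_real_derivative G t (Y t)) (at t within {a..})"
    and lt: "X a < Y a" and t: "t \<ge> a"
  shows "X t < Y t"
proof -
  obtain L where L: "L > 0" "\<forall>s\<in>{a..t}. \<forall>x y. \<bar>G s x - G s y\<bar> \<le> L * \<bar>x - y\<bar>"
    using lip by blast
  have sub: "{a..t} \<subseteq> {a..}" by auto
  show ?thesis
  proof (rule ode_compare[where G = G and L = L and a = a and b = t and X = X and Y = Y and t = t])
    fix s assume s: "s \<in> {a..t}"
    show "(X has_real_derivative G s (X s)) (at s within {a..t})"
      using DERIV_subset[OF dX sub] s by auto
    show "(Y has_real_derivative G s (Y s)) (at s within {a..t})"
      using DERIV_subset[OF dY sub] s by auto
  qed (use L(2) lt t in auto)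
qed

lemma stay_pos:
  fixes f f' :: "real \<Rightarrow> real"
  assumes d: "\<And>t. t \<ge> a \<Longrightarrow> (f has_real_derivative f' t) (at t within {a..})"
    and fa: "f a > 0"
    and z: "\<And>t. t \<ge> a \<Longrightarrow> f t = 0 \<Longrightarrow> f' t > 0"
    and t: "t \<ge> a"
  shows "f t > 0"
proof (rule ccontr)
  assume "\<not> f t > 0"
  then have ft: "f t \<le> 0" by simp
  have cont: "continuous_on {a..} f"
    by (rule deriv_cont_on[of "{a..}" f f']) (use d in auto)
  then have cont2: "continuous_on {a..t} f" by (rule continuous_on_subset) auto
  define S where "S = {a..t} \<inter> f -` {..0}"
  have Sc: "closed S" unfolding S_def by (rule continuous_closed_preimage[OF cont2]) auto
  have Sne: "S \<noteq> {}" using ft t by (auto simp: S_def)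
  have Sb: "bdd_below S" unfolding S_def by (rule bdd_belowI[of _ a]) auto
  define s0 where "s0 = Inf S"
  have s0S: "s0 \<in> S" unfolding s0_def by (rule closed_contains_Inf[OF Sne Sb Sc])
  have s0le: "s0 \<le> s" if "s \<in> S" for s unfolding s0_def by (rule cInf_lower[OF that Sb])
  have s0a: "a \<le> s0" "s0 \<le> t" "f s0 \<le> 0" using s0S by (auto simp: S_def)
  have before: "f s > 0" if "a \<le> s" "s < s0" for s
  proof (rule ccontr)
    assume "\<not> f s > 0"
    then have "s \<in> S" using that s0a by (auto simp: S_def)
    then show False using s0le that by fastforce
  qed
  have "a \<noteq> s0" using fa s0a by auto
  then have as0: "a < s0" using s0a by simp
  have cont3: "continuous_on {a..s0} f" by (rule continuous_on_subset[OF cont]) auto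
  obtain s1 where s1: "a \<le> s1" "s1 \<le> s0" "f s1 = 0"
    using IVT2'[of f s0 0 a, OF s0a(3) _ _ cont3] fa as0 by auto
  have "s1 = s0" using before[of s1] s1 by force
  with s1 have fs0: "f s0 = 0" by simp
  have "f' s0 > 0" using z[OF s0a(1) fs0] .
  from has_real_derivative_pos_inc_left[OF d[OF s0a(1)] this]
  obtain dd where dd: "dd > 0" "\<forall>h>0. s0 - h \<in> {a..} \<longrightarrow> h < dd \<longrightarrow> f (s0 - h) < f s0" by blast
  define hh where "hh = min (dd/2) (s0 - a)"
  have hh: "hh > 0" "hh < dd" "s0 - hh \<ge> a" using dd as0 by (auto simp: hh_def)
  have "f (s0 - hh) < 0" using dd(2) hh fs0 by auto
  moreover have "f (s0 - hh) > 0" using before[of "s0 - hh"] hh by auto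
  ultimately show False by simp
qed

lemma lip_from_deriv:
  fixes g g' :: "real \<Rightarrow> real \<Rightarrow> real"
  assumes d: "\<And>t c. (g t has_real_derivative g' t c) (at c)"
    and c: "continuous_on UNIV (\<lambda>p. g' (fst p) (snd p))"
  shows "\<exists>L>0. \<forall>t\<in>{a..b}. \<forall>x\<in>{m..M}. \<forall>y\<in>{m..M}. \<bar>g t x - g t y\<bar> \<le> L * \<bar>x - y\<bar>"
proof -
  have "compact ((\<lambda>p. g' (fst p) (snd p)) ` ({a..b} \<times> {m..M}))"
    by (intro compact_continuous_image continuous_on_subset[OF c] compact_Times compact_Icc) auto
  then obtain B where B: "\<And>z. z \<in> (\<lambda>p. g' (fst p) (snd p)) ` ({a..b} \<times> {m..M}) \<Longrightarrow> norm z \<le> B"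
    using compact_imp_bounded bounded_iff by metis
  define L where "L = max B 1"
  have gB: "\<bar>g' t c\<bar> \<le> L" if "t \<in> {a..b}" "c \<in> {m..M}" for t c
    using B[of "g' t c"] that by (force simp: L_def)
  have main: "\<bar>g t x - g t y\<bar> \<le> L * \<bar>x - y\<bar>" if t: "t \<in> {a..b}" and xy: "x \<in> {m..M}" "y \<in> {m..M}" "x < y" for t x y
  proof -
    obtain z where z: "x < z" "z < y" "g t y - g t x = (y - x) * g' t z"
      using MVT2[OF xy(3), of "g t" "g' t"] d by blast
    have "z \<in> {m..M}" using z xy by auto
    then have "\<bar>g' t z\<bar> \<le> L" using gB t by blast
    then have "\<bar>g t y - g t x\<bar> \<le> \<bar>y - x\<bar> * L" using z(3) by (simp add: abs_mult mult_left_mono)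
    then show ?thesis by (simp add: abs_minus_commute mult.commute)
  qed
  show ?thesis
  proof (intro exI conjI ballI)
    show "L > 0" by (simp add: L_def)
    fix t x y assume "t \<in> {a..b}" "x \<in> {m..M}" "y \<in> {m..M}"
    then show "\<bar>g t x - g t y\<bar> \<le> L * \<bar>x - y\<bar>"
      using main[of t x y] main[of t y x]
      by (cases x y rule: linorder_cases) (auto simp: abs_minus_commute)
  qed
qed



lemma h_comp_lim:
  fixes h :: "real \<Rightarrow> real \<Rightarrow> real" and u :: "real \<Rightarrow> real"
  assumes h_smooth: "\<And>n v x. (deriv ^^ n) (h v) differentiable (at x)"
    and h_lim: "\<exists>\<delta>>0. \<exists>H. \<forall>n. uniform_limit {-\<delta>..\<delta>} (\<lambda>v. (deriv ^^ n) (h v)) ((deriv ^^ n) H) at_top"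
    and hc: "((\<lambda>v. h v 0) \<longlongrightarrow> hc) at_top"
    and u: "(u \<longlongrightarrow> 0) at_top"
  shows "((\<lambda>v. h v (u v)) \<longlongrightarrow> hc) at_top"
proof -
  obtain \<delta> H where \<delta>: "\<delta> > 0" and ul0: "\<forall>n. uniform_limit {-\<delta>..\<delta>} (\<lambda>v. (deriv ^^ n) (h v)) ((deriv ^^ n) H) at_top"
    using h_lim by blast
  have ul: "uniform_limit {-\<delta>..\<delta>} (\<lambda>v. h v) H at_top" using ul0[rule_format, of 0] by simp
  have hcont: "continuous_on {-\<delta>..\<delta>} (h v)" for v
  proof -
    have "(h v) differentiable (at x)" for x using h_smooth[of 0 v x] by simp
    then show ?thesis
      by (meson differentiable_imp_continuous_within continuous_at_imp_continuous_on)
  qed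
  have Hc: "continuous_on {-\<delta>..\<delta>} H"
    by (rule uniform_limit_theorem[OF _ ul]) (auto simp: hcont)
  have "((\<lambda>v. h v 0) \<longlongrightarrow> H 0) at_top"
    by (rule tendsto_uniform_limitI[OF ul]) (use \<delta> in auto)
  then have H0: "H 0 = hc" using hc tendsto_unique[OF trivial_limit_at_top_linorder] by blast
  have "isCont H 0"
    by (rule continuous_on_interior[OF Hc]) (use \<delta> in simp)
  then have t1: "((\<lambda>v. H (u v)) \<longlongrightarrow> hc) at_top"
    using isCont_tendsto_compose[OF _ u] H0 by fastforce
  have t2: "((\<lambda>v. h v (u v) - H (u v)) \<longlongrightarrow> 0) at_top"
  proof (rule tendstoI)
    fix e :: real assume e: "e > 0"
    have ev1: "\<forall>\<^sub>F v in at_top. \<forall>x\<in>{-\<delta>..\<delta>}. dist (h v x) (H x) < e"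
      by (rule uniform_limitD[OF ul e])
    have ev2: "\<forall>\<^sub>F v in at_top. dist (u v) 0 < \<delta>" by (rule tendstoD[OF u \<delta>])
    show "\<forall>\<^sub>F v in at_top. dist (h v (u v) - H (u v)) 0 < e"
    proof (rule eventually_mono[OF eventually_conj[OF ev1 ev2]])
      fix v assume a: "(\<forall>x\<in>{-\<delta>..\<delta>}. dist (h v x) (H x) < e) \<and> dist (u v) 0 < \<delta>"
      then have "u v \<in> {-\<delta>..\<delta>}" by (auto simp: dist_real_def)
      with a show "dist (h v (u v) - H (u v)) 0 < e" by (auto simp: dist_real_def)
    qed
  qed
  have "((\<lambda>v. (h v (u v) - H (u v)) + H (u v)) \<longlongrightarrow> 0 + hc) at_top"
    by (rule tendsto_add[OF t2 t1])
  then show ?thesis by simp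
qed



theorem proposition5:
  fixes h :: "real \<Rightarrow> real \<Rightarrow> real"
    and xp xm xp' xm' :: "real \<Rightarrow> real"
    and hc \<alpha> \<beta> \<epsilon>\<alpha> \<epsilon>\<beta> v0 :: real
  assumes h_pos: "\<And>v x. h v x > 0"
    and h_smooth: "\<And>n v x. (deriv ^^ n) (h v) differentiable (at x)"
    and h_cont: "\<And>n. continuous_on UNIV (\<lambda>(v, x). (deriv ^^ n) (h v) x)"
    and h_lim: "\<exists>\<delta>>0. \<exists>H. \<forall>n. uniform_limit {-\<delta>..\<delta>} (\<lambda>v. (deriv ^^ n) (h v)) ((deriv ^^ n) H) at_top"
    and hc: "((\<lambda>v. h v 0) \<longlongrightarrow> hc) at_top"
    and xp_deriv: "\<And>v. (xp has_real_derivative xp' v) (at v)"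
    and xm_deriv: "\<And>v. (xm has_real_derivative xm' v) (at v)"
    and order: "\<And>v. xm v < xp v"
    and outer_shrinks: "\<And>v. xp' v < 0"
    and case2: "\<And>v. xm' v > 0"
    and xp_lim: "(xp \<longlongrightarrow> 0) at_top"
    and xm_lim: "(xm \<longlongrightarrow> 0) at_top"
    and ratio_lim: "((\<lambda>v. xm v / xp v) \<longlongrightarrow> 0) at_top"
    and \<alpha>: "0 < \<alpha>" "\<alpha> < 1" and \<beta>: "0 < \<beta>"
    and \<epsilon>: "\<epsilon>\<alpha> > 0" "\<epsilon>\<beta> > 0"
    and cond_minus: "\<And>v. v > v0 \<Longrightarrow>
        xm' v / ((xp v + \<beta> * xm v) * xm v) < - (hc / 2) * (1 + \<epsilon>\<beta>) * ((1 + \<beta>) / \<beta>)"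
    and cond_plus: "\<And>v. v > v0 \<Longrightarrow>
        xp' v / ((\<alpha> * xp v - xm v) * xp v) > - (hc / 2) * (1 - \<epsilon>\<alpha>) * ((1 - \<alpha>) / \<alpha>)"
  shows "type2 h xp xm"
proof -
  have xp_dec: "xp t < xp s" if "s < t" for s t
    by (rule DERIV_neg_imp_decreasing[OF that]) (use xp_deriv outer_shrinks in blast)
  have xm_inc: "xm s < xm t" if "s < t" for s t
    by (rule DERIV_pos_imp_increasing[OF that]) (use xm_deriv case2 in blast)
  have xp_pos: "xp v > 0" for v
  proof (rule ccontr)
    assume "\<not> xp v > 0"
    then have neg: "xp (v + 1) < 0" using xp_dec[of v "v+1"] by simp
    have "\<forall>\<^sub>F w in at_top. xp w > xp (v + 1)" by (rule order_tendstoD(1)[OF xp_lim neg])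
    then obtain N where N: "\<And>w. w \<ge> N \<Longrightarrow> xp w > xp (v + 1)" by (auto simp: eventually_at_top_linorder)
    have "xp (max N (v + 2)) > xp (v + 1)" using N by simp
    moreover have "xp (max N (v + 2)) < xp (v + 1)" by (rule xp_dec) simp
    ultimately show False by simp
  qed
  have xm_neg: "xm v < 0" for v
  proof (rule ccontr)
    assume "\<not> xm v < 0"
    then have pos: "xm (v + 1) > 0" using xm_inc[of v "v+1"] by simp
    have "\<forall>\<^sub>F w in at_top. xm w < xm (v + 1)" by (rule order_tendstoD(2)[OF xm_lim pos])
    then obtain N where N: "\<And>w. w \<ge> N \<Longrightarrow> xm w < xm (v + 1)" by (auto simp: eventually_at_top_linorder)
    have "xm (max N (v + 2)) < xm (v + 1)" using N by simp
    moreover have "xm (max N (v + 2)) > xm (v + 1)" by (rule xm_inc) simp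
    ultimately show False by simp
  qed
  have hc_nn: "hc \<ge> 0"
    by (rule tendsto_lowerbound[OF hc]) (auto intro: always_eventually less_imp_le h_pos)
  have hc_pos: "hc > 0"
  proof (rule ccontr)
    assume "\<not> hc > 0"
    then have hc0: "hc = 0" using hc_nn by simp
    have "xp' (v0 + 1) / ((\<alpha> * xp (v0 + 1) - xm (v0 + 1)) * xp (v0 + 1)) > 0"
      using cond_plus[of "v0 + 1"] hc0 by simp
    moreover have "(\<alpha> * xp (v0 + 1) - xm (v0 + 1)) * xp (v0 + 1) > 0"
      using xp_pos[of "v0+1"] xm_neg[of "v0+1"] \<alpha> by (intro mult_pos_pos) (smt (verit) mult_pos_pos, simp)
    ultimately show False using outer_shrinks[of "v0 + 1"] divide_neg_pos by (metis less_asym)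
  qed
  have zlim: "((\<lambda>v. \<alpha> * xp v) \<longlongrightarrow> 0) at_top"
    using tendsto_mult[OF tendsto_const[of \<alpha>] xp_lim] by simp
  have ylim: "((\<lambda>v. - \<beta> * xm v) \<longlongrightarrow> 0) at_top"
    using tendsto_mult[OF tendsto_const[of "-\<beta>"] xm_lim] by simp
  have ev1: "\<forall>\<^sub>F v in at_top. v > v0" by (rule eventually_gt_at_top)
  have ev2: "\<forall>\<^sub>F v in at_top. xm v / xp v > - \<alpha> / \<beta>"
    by (rule order_tendstoD(1)[OF ratio_lim]) (use \<alpha> \<beta> in simp)
  have ev3: "\<forall>\<^sub>F v in at_top. h v (\<alpha> * xp v) > (1 - \<epsilon>\<alpha>) * hc"
    by (rule order_tendstoD(1)[OF h_comp_lim[OF h_smooth h_lim hc zlim]]) (use \<epsilon> hc_pos in simp)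
  have ev4: "\<forall>\<^sub>F v in at_top. h v (- \<beta> * xm v) < (1 + \<epsilon>\<beta>) * hc"
    by (rule order_tendstoD(2)[OF h_comp_lim[OF h_smooth h_lim hc ylim]]) (use \<epsilon> hc_pos in simp)
  obtain v1 where v1: "\<And>v. v \<ge> v1 \<Longrightarrow> v > v0 \<and> xm v / xp v > - \<alpha> / \<beta> \<and>
      h v (\<alpha> * xp v) > (1 - \<epsilon>\<alpha>) * hc \<and> h v (- \<beta> * xm v) < (1 + \<epsilon>\<beta>) * hc"
    using eventually_conj[OF ev1 eventually_conj[OF ev2 eventually_conj[OF ev3 ev4]]]
    by (auto simp: eventually_at_top_linorder)
  define y where "y v = - \<beta> * xm v" for v
  define z where "z v = \<alpha> * xp v" for v
  define m where "m = xm v1"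
  define M where "M = xp v1"
  have ratio: "\<beta> * xm v > - \<alpha> * xp v" if "v \<ge> v1" for v
  proof -
    have "- \<alpha> / \<beta> < xm v / xp v" using v1[OF that] by simp
    then have "- \<alpha> / \<beta> * xp v < xm v" using xp_pos[of v] by (simp add: pos_less_divide_eq)
    then have "\<beta> * (- \<alpha> / \<beta> * xp v) < \<beta> * xm v" using \<beta> by (metis mult_strict_left_mono)
    then show ?thesis using \<beta> by simp
  qed
  have F1: "xm v < y v" "0 < y v" if "v \<ge> v1" for v
    using xm_neg[of v] \<beta> mult_pos_neg[of \<beta> "xm v"] by (auto simp: y_def)
  have F2: "y v < z v" if "v \<ge> v1" for v using ratio[OF that] by (simp add: y_def z_def)
  have axp: "\<alpha> * xp v < xp v" for v
    using mult_strict_right_mono[OF \<alpha>(2) xp_pos[of v]] by simp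
  have F3: "z v < xp v" for v using axp[of v] by (simp add: z_def)
  have F4: "xp v + \<beta> * xm v > 0" if "v \<ge> v1" for v
    using ratio[OF that] axp[of v] by linarith
  have mle: "m \<le> xm v" if "v \<ge> v1" for v
    using xm_inc[of v1 v] that by (cases "v = v1") (auto simp: m_def)
  have Mge: "xp v \<le> M" if "v \<ge> v1" for v
    using xp_dec[of v1 v] that by (cases "v = v1") (auto simp: M_def)
  have mM: "m \<le> M" using order[of v1] by (simp add: m_def M_def)
  define cl where "cl x = max m (min M x)" for x
  have cl_id: "cl x = x" if "m \<le> x" "x \<le> M" for x using that by (simp add: cl_def)
  have cl_in: "cl x \<in> {m..M}" for x using mM by (auto simp: cl_def)
  have cl_lip: "\<bar>cl x - cl x'\<bar> \<le> \<bar>x - x'\<bar>" for x x' unfolding cl_def by (auto simp: abs_le_iff max_def min_def)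
  have cl_cont: "continuous_on UNIV cl" unfolding cl_def by (intro continuous_intros)
  define g where "g v c = h v c * (c - xp v) * (c - xm v) / 2" for v c
  define g' where "g' v c = deriv (h v) c * (c - xp v) * (c - xm v) / 2 + h v c * ((c - xm v) + (c - xp v)) / 2" for v c
  define G where "G v x = g v (cl x)" for v x
  have hd: "(h v has_real_derivative deriv (h v) c) (at c)" for v c
    using h_smooth[of 0 v c] by (simp add: DERIV_deriv_iff_real_differentiable)
  have hcont0: "continuous_on UNIV (\<lambda>p. h (fst p) (snd p))"
    using h_cont[of 0] by (simp add: case_prod_unfold)
  have hcont1: "continuous_on UNIV (\<lambda>p. deriv (h (fst p)) (snd p))"
    using h_cont[of 1] by (simp add: case_prod_unfold)
  have xpc: "continuous_on UNIV xp" by (rule has_real_derivative_imp_continuous_on) (use xp_deriv in blast)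
  have xmc: "continuous_on UNIV xm" by (rule has_real_derivative_imp_continuous_on) (use xm_deriv in blast)
  have xpc2: "continuous_on UNIV (\<lambda>p. xp (fst p))"
    by (rule continuous_on_compose2[OF xpc]) (auto intro: continuous_intros)
  have xmc2: "continuous_on UNIV (\<lambda>p. xm (fst p))"
    by (rule continuous_on_compose2[OF xmc]) (auto intro: continuous_intros)
  have gd: "(g v has_real_derivative g' v c) (at c)" for v c
  proof -
    have d1: "((\<lambda>c. c - xp v) has_real_derivative 1) (at c)" by (auto intro!: derivative_eq_intros)
    have d2: "((\<lambda>c. c - xm v) has_real_derivative 1) (at c)" by (auto intro!: derivative_eq_intros)
    have d3: "((\<lambda>c. h v c * (c - xp v)) has_real_derivative (deriv (h v) c * (c - xp v) + h v c * 1)) (at c)"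
      by (rule DERIV_cong[OF DERIV_mult'[OF hd d1]]) (simp add: algebra_simps)
    have d4: "((\<lambda>c. h v c * (c - xp v) * (c - xm v)) has_real_derivative
        (deriv (h v) c * (c - xp v) + h v c * 1) * (c - xm v) + h v c * (c - xp v) * 1) (at c)"
      by (rule DERIV_cong[OF DERIV_mult'[OF d3 d2]]) (simp add: algebra_simps)
    have d5: "((\<lambda>c. h v c * (c - xp v) * (c - xm v) / 2) has_real_derivative
        ((deriv (h v) c * (c - xp v) + h v c * 1) * (c - xm v) + h v c * (c - xp v) * 1) / 2) (at c)"
      by (rule DERIV_cdivide[OF d4])
    moreover have "((deriv (h v) c * (c - xp v) + h v c * 1) * (c - xm v) + h v c * (c - xp v) * 1) / 2 = g' v c"
      unfolding g'_def by (simp add: field_simps)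
    ultimately show ?thesis by (simp add: g_def[abs_def])
  qed
  have g'c: "continuous_on UNIV (\<lambda>p. g' (fst p) (snd p))"
    unfolding g'_def by (intro continuous_intros hcont0 hcont1 xpc2 xmc2) auto
  have Gcont: "continuous_on UNIV (\<lambda>p. G (fst p) (snd p))"
  proof -
    have a: "continuous_on UNIV (\<lambda>p. h (fst p) (cl (snd p)))"
      by (rule continuous_on_compose2[OF hcont0, of UNIV "\<lambda>p. (fst p, cl (snd p))", simplified])
         (intro continuous_intros continuous_on_compose2[OF cl_cont], auto)
    have b: "continuous_on UNIV (\<lambda>p. cl (snd p))"
      by (rule continuous_on_compose2[OF cl_cont]) (auto intro: continuous_intros)
    show ?thesis unfolding G_def g_def by (intro continuous_intros a b xpc2 xmc2) auto
  qed
  have lipG: "\<exists>L>0. \<forall>t\<in>{a..b}. \<forall>x x'. \<bar>G t x - G t x'\<bar> \<le> L * \<bar>x - x'\<bar>" for a b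
  proof -
    obtain L where L: "L > 0" "\<forall>t\<in>{a..b}. \<forall>x\<in>{m..M}. \<forall>x'\<in>{m..M}. \<bar>g t x - g t x'\<bar> \<le> L * \<bar>x - x'\<bar>"
      using lip_from_deriv[OF gd g'c, of a b m M] by blast
    have "\<bar>G t x - G t x'\<bar> \<le> L * \<bar>x - x'\<bar>" if "t \<in> {a..b}" for t x x'
    proof -
      have "\<bar>G t x - G t x'\<bar> \<le> L * \<bar>cl x - cl x'\<bar>" unfolding G_def using L(2) that cl_in by blast
      also have "\<dots> \<le> L * \<bar>x - x'\<bar>" using L(1) cl_lip by (simp add: mult_left_mono)
      finally show ?thesis .
    qed
    with L(1) show ?thesis by blast
  qed
  have G_orig: "G t x = h t x * (x - xp t) * (x - xm t) / 2" if "t \<ge> v1" "xm t < x" "x < xp t" for t x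
  proof -
    have "m \<le> x" "x \<le> M" using mle[OF that(1)] Mge[OF that(1)] that by auto
    then show ?thesis by (simp add: G_def g_def cl_id)
  qed
  have orig_mod: "\<And>t. t \<ge> v1 \<Longrightarrow> (X has_real_derivative G t (X t)) (at t within {v1..})"
    if "outgoing_geodesic h xp xm v1 X" "between_AHs xp xm v1 X" for X
    using that G_orig unfolding outgoing_geodesic_def between_AHs_def by metis
  have mod_orig: "X v1 \<in> trapped_data h xp xm v1"
    if d: "\<And>t. t \<ge> v1 \<Longrightarrow> (X has_real_derivative G t (X t)) (at t within {v1..})"
      and b: "\<And>t. t \<ge> v1 \<Longrightarrow> xm t < X t \<and> X t < xp t" for X
  proof -
    have "outgoing_geodesic h xp xm v1 X"
      unfolding outgoing_geodesic_def using d b G_orig by metis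
    moreover have "between_AHs xp xm v1 X" unfolding between_AHs_def using b by blast
    ultimately show ?thesis unfolding trapped_data_def by blast
  qed
  have claimA: "y0 \<in> trapped_data h xp xm v1" if y0: "y v1 < y0" "y0 < z v1" for y0
  proof -
    obtain Y where Y0: "Y v1 = y0" and dY: "\<And>t. t \<ge> v1 \<Longrightarrow> (Y has_real_derivative G t (Y t)) (at t within {v1..})"
      using global_exist[OF Gcont lipG, of v1 y0] by blast
    have upper: "z t - Y t > 0" if t: "t \<ge> v1" for t
    proof (rule stay_pos[where f = "\<lambda>t. z t - Y t" and f' = "\<lambda>t. \<alpha> * xp' t - G t (Y t)" and a = v1])
      fix t assume t: "t \<ge> v1"
      show "((\<lambda>t. z t - Y t) has_real_derivative \<alpha> * xp' t - G t (Y t)) (at t within {v1..})"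
        unfolding z_def by (intro DERIV_diff DERIV_cmult has_field_derivative_at_within[OF xp_deriv] dY t)
    next
      fix t assume t: "t \<ge> v1" and zero: "z t - Y t = 0"
      have vt: "t > v0" "h t (\<alpha> * xp t) > (1 - \<epsilon>\<alpha>) * hc" using v1[OF t] by auto
      have Yt: "Y t = z t" using zero by simp
      have Gz: "G t (Y t) = h t (z t) * (z t - xp t) * (z t - xm t) / 2"
        using G_orig[OF t, of "z t"] F1[OF t] F2[OF t] F3[of t] Yt by simp
      define P where "P = (\<alpha> * xp t - xm t) * xp t"
      have P: "P > 0" unfolding P_def using xp_pos[of t] xm_neg[of t] \<alpha> by (intro mult_pos_pos) (smt (verit) mult_pos_pos, simp)
      define A where "A = xp' t"
      define R where "R = - (hc / 2) * (1 - \<epsilon>\<alpha>) * ((1 - \<alpha>) / \<alpha>)"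
      have "R < A / P" using cond_plus[OF vt(1)] by (simp add: A_def P_def R_def)
      then have "R * P < A" using P by (simp add: pos_less_divide_eq)
      then have h1: "\<alpha> * (R * P) < \<alpha> * A" using \<alpha> by simp
      have h1': "\<alpha> * (R * P) = - (hc / 2) * (1 - \<epsilon>\<alpha>) * (1 - \<alpha>) * P"
        using \<alpha> by (simp add: R_def field_simps)
      have q: "(1 - \<alpha>) * P / 2 > 0" using P \<alpha> by simp
      have h2: "(1 - \<epsilon>\<alpha>) * hc * ((1 - \<alpha>) * P / 2) < h t (z t) * ((1 - \<alpha>) * P / 2)"
        using mult_strict_right_mono[OF vt(2) q] by (simp add: z_def)
      have e: "h t (z t) * (z t - xp t) * (z t - xm t) / 2 = - (h t (z t) * ((1 - \<alpha>) * P / 2))"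
        by (simp add: z_def P_def field_simps)
      have "- (hc / 2) * (1 - \<epsilon>\<alpha>) * (1 - \<alpha>) * P = - ((1 - \<epsilon>\<alpha>) * hc * ((1 - \<alpha>) * P / 2))"
        by (simp add: algebra_simps)
      then show "\<alpha> * xp' t - G t (Y t) > 0"
        using h1 h1' h2 by (simp only: Gz e A_def[symmetric]; linarith)
    qed (use Y0 y0 t in auto)
    have lower: "Y t - y t > 0" if t: "t \<ge> v1" for t
    proof (rule stay_pos[where f = "\<lambda>t. Y t - y t" and f' = "\<lambda>t. G t (Y t) - (- \<beta> * xm' t)" and a = v1])
      fix t assume t: "t \<ge> v1"
      show "((\<lambda>t. Y t - y t) has_real_derivative G t (Y t) - (- \<beta> * xm' t)) (at t within {v1..})"
        unfolding y_def by (intro DERIV_diff DERIV_cmult has_field_derivative_at_within[OF xm_deriv] dY t)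
    next
      fix t assume t: "t \<ge> v1" and zero: "Y t - y t = 0"
      have vt: "t > v0" "h t (- \<beta> * xm t) < (1 + \<epsilon>\<beta>) * hc" using v1[OF t] by auto
      have Yt: "Y t = y t" using zero by simp
      have Gy: "G t (Y t) = h t (y t) * (y t - xp t) * (y t - xm t) / 2"
        using G_orig[OF t, of "y t"] F1[OF t] F2[OF t] F3[of t] Yt by simp
      define Q where "Q = (xp t + \<beta> * xm t) * xm t"
      have Q: "Q < 0" unfolding Q_def using F4[OF t] xm_neg[of t] by (simp add: mult_pos_neg)
      define B where "B = xm' t"
      define R where "R = - (hc / 2) * (1 + \<epsilon>\<beta>) * ((1 + \<beta>) / \<beta>)"
      have "B / Q < R" using cond_minus[OF vt(1)] by (simp add: B_def Q_def R_def)
      then have "R * Q < B" using Q by (simp add: neg_divide_less_eq)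
      then have h1: "\<beta> * (R * Q) < \<beta> * B" using \<beta> by simp
      have h1': "\<beta> * (R * Q) = (1 + \<epsilon>\<beta>) * hc * ((1 + \<beta>) * (- Q) / 2)"
        using \<beta> by (simp add: R_def field_simps)
      have q: "(1 + \<beta>) * (- Q) / 2 > 0" using Q \<beta> mult_pos_neg[of "1 + \<beta>" Q] by simp
      have h2: "h t (y t) * ((1 + \<beta>) * (- Q) / 2) < (1 + \<epsilon>\<beta>) * hc * ((1 + \<beta>) * (- Q) / 2)"
        using mult_strict_right_mono[OF vt(2) q] by (simp add: y_def)
      have e: "h t (y t) * (y t - xp t) * (y t - xm t) / 2 = - (h t (y t) * ((1 + \<beta>) * (- Q) / 2))"
        by (simp add: y_def Q_def field_simps)
      show "G t (Y t) - (- \<beta> * xm' t) > 0"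
        using h1 h1' h2 by (simp only: Gy e B_def[symmetric]; linarith)
    qed (use Y0 y0 t in auto)
    have "Y v1 \<in> trapped_data h xp xm v1"
    proof (rule mod_orig[OF dY])
      fix t assume t: "t \<ge> v1"
      show "xm t < Y t \<and> Y t < xp t"
        using upper[OF t] lower[OF t] F1[OF t] F3[of t] by auto
    qed
    then show ?thesis using Y0 by simp
  qed
  have claimB: "q \<in> trapped_data h xp xm v1"
    if p: "p \<in> trapped_data h xp xm v1" and r: "r \<in> trapped_data h xp xm v1" and pq: "p < q" "q < r" for p q r
  proof -
    obtain X where X: "outgoing_geodesic h xp xm v1 X" "X v1 = p" "between_AHs xp xm v1 X"
      using p unfolding trapped_data_def by blast
    obtain Z where Z: "outgoing_geodesic h xp xm v1 Z" "Z v1 = r" "between_AHs xp xm v1 Z"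
      using r unfolding trapped_data_def by blast
    obtain Y where Y0: "Y v1 = q" and dY: "\<And>t. t \<ge> v1 \<Longrightarrow> (Y has_real_derivative G t (Y t)) (at t within {v1..})"
      using global_exist[OF Gcont lipG, of v1 q] by blast
    have dX: "\<And>t. t \<ge> v1 \<Longrightarrow> (X has_real_derivative G t (X t)) (at t within {v1..})"
      using orig_mod[OF X(1) X(3)] .
    have dZ: "\<And>t. t \<ge> v1 \<Longrightarrow> (Z has_real_derivative G t (Z t)) (at t within {v1..})"
      using orig_mod[OF Z(1) Z(3)] .
    have "Y v1 \<in> trapped_data h xp xm v1"
    proof (rule mod_orig[OF dY])
      fix t assume t: "t \<ge> v1"
      have XY0: "X v1 < Y v1" using X(2) Y0 pq(1) by simp
      have YZ0: "Y v1 < Z v1" using Z(2) Y0 pq(2) by simp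
      have "X t < Y t" by (rule global_compare[OF lipG dX dY XY0 t])
      moreover have "Y t < Z t" by (rule global_compare[OF lipG dY dZ YZ0 t])
      moreover have "xm t < X t" "Z t < xp t" using X(3) Z(3) t unfolding between_AHs_def by auto
      ultimately show "xm t < Y t \<and> Y t < xp t" by simp
    qed
    then show ?thesis using Y0 by simp
  qed
  define T where "T = trapped_data h xp xm v1"
  have Tsub: "T \<subseteq> {m..M}"
  proof
    fix x assume "x \<in> T"
    then obtain X where "X v1 = x" "between_AHs xp xm v1 X" unfolding T_def trapped_data_def by blast
    then show "x \<in> {m..M}" unfolding between_AHs_def m_def M_def by force
  qed
  have Tint: "is_interval T"
    unfolding is_interval_1
  proof (intro ballI allI impI)
    fix p r x assume p: "p \<in> T" and r: "r \<in> T" and x: "p \<le> x \<and> x \<le> r"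
    show "x \<in> T"
    proof (cases "x = p \<or> x = r")
      case True then show ?thesis using p r by auto
    next
      case False then show ?thesis using claimB[of p r x] p r x by (auto simp: T_def)
    qed
  qed
  have Tl: "T \<in> lmeasurable"
    by (rule measurable_convex[OF is_interval_convex[OF Tint]]) (rule bounded_subset[OF compact_imp_bounded[OF compact_Icc] Tsub])
  then have Ts: "T \<in> sets lebesgue" by (rule fmeasurableD)
  have Ioo: "{y v1<..<z v1} \<subseteq> T" using claimA by (auto simp: T_def)
  have "emeasure lebesgue {y v1<..<z v1} \<le> emeasure lebesgue T"
    by (rule emeasure_mono[OF Ioo Ts])
  moreover have "emeasure lebesgue {y v1<..<z v1} = ennreal (z v1 - y v1)"
    using F2[of v1] by (simp add: emeas_Ioo)
  moreover have "ennreal (z v1 - y v1) > 0" using F2[of v1] by simp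
  ultimately have "emeasure lebesgue T > 0" by (metis order_less_le_trans)
  then show ?thesis unfolding type2_def using Ts T_def by blast
qed

end
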